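(* Let $\mathcal{X}=\mathcal{X}_1\times\cdots\times\mathcal{X}_K$, let $(\pi_n)_{n\ge1}\subset\mathcal{P}(\mathcal{X})$ possibly depend on random data $Y^{(n)}\sim Q^{(n)}$, and assume (A1): there exist $\tilde\pi\in\mathcal{P}(\mathcal{X})$ and coordinate-wise maps $\phi_n(\mathbf{x})=(\phi_{n,1}(x_1),\dots,\phi_{n,K}(x_K))$, with each $\phi_{n,j}:\mathcal{X}_j\to\mathcal{X}_j$ injective and measurable, such that $\|\tilde\pi_n-\tilde\pi\|_{TV}\to0$ in $Q^{(n)}$-probability, where $\tilde\pi_n=\pi_n\circ\phi_n^{-1}$. Let $P_n$ and $\tilde P_n$ be the deterministic-scan Gibbs samplers targeting $\pi_n$ and $\tilde\pi_n$ respectively. Then for every $t$ and $M\ge1$, \[ \sup_{\mu_n\in\mathcal{N}(\pi_n,M)}\|\mu_nP_n^t-\pi_n\|_{TV}=\sup_{\tilde\mu_n\in\mathcal{N}(\tilde\pi_n,M)}\|\tilde\mu_n\tilde P_n^t-\tilde\pi_n\|_{TV}. \]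
   Context: $\mathcal{P}(\mathcal{X})$ is the set of probability distributions on $\mathcal{X}$; $\|\mu-\nu\|_{TV}=\sup_A|\mu(A)-\nu(A)|$. The deterministic-scan Gibbs sampler targeting $\pi$ is the product $P_1\cdots P_K$ of kernels, where $P_i$ resamples coordinate $x_i$ from $\pi(\mathrm{d}x_i\mid\mathbf{x}^{(-i)})$ leaving other coordinates unchanged. $\mathcal{N}(\pi,M)=\{\mu\in\mathcal{P}(\mathcal{X}):\mu(A)\le M\pi(A)\ \forall A\}$. *)

theory Defs
  imports "HOL-Probability.Probability"
begin

text \<open>Product space X_1 x ... x X_K, coordinates indexed by {..<K}, all coordinate
  spaces living in one type 'a with sigma-algebras Ms j.\<close>

abbreviation prodX :: "nat \<Rightarrow> (nat \<Rightarrow> 'a measure) \<Rightarrow> (nat \<Rightarrow> 'a) measure" where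
  "prodX K Ms \<equiv> PiM {..<K} Ms"

definition tv_dist :: "'b measure \<Rightarrow> 'b measure \<Rightarrow> 'b measure \<Rightarrow> real" where
  "tv_dist X \<mu> \<nu> = (SUP A\<in>sets X. \<bar>measure \<mu> A - measure \<nu> A\<bar>)"

definition nbhd :: "'b measure \<Rightarrow> 'b measure \<Rightarrow> real \<Rightarrow> 'b measure set" where
  "nbhd X \<pi> M = {\<mu> \<in> space (prob_algebra X). \<forall>A\<in>sets X. measure \<mu> A \<le> M * measure \<pi> A}"

text \<open>kappa is a regular conditional distribution of coordinate i given the other
  coordinates under pi: a Markov kernel depending only on the coordinates other than i,
  such that for every measurable set A determined by the coordinates other than i and
  every measurable D, integral over A of kappa(x, D) d pi = pi(A and x_i in D).\<close>
definition cond_dist ::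
  "nat \<Rightarrow> (nat \<Rightarrow> 'a measure) \<Rightarrow> nat \<Rightarrow> (nat \<Rightarrow> 'a) measure \<Rightarrow> ((nat \<Rightarrow> 'a) \<Rightarrow> 'a measure) \<Rightarrow> bool"
  where
  "cond_dist K Ms i \<pi> \<kappa> \<longleftrightarrow>
     \<kappa> \<in> prodX K Ms \<rightarrow>\<^sub>M prob_algebra (Ms i) \<and>
     (\<forall>x\<in>space (prodX K Ms). \<forall>y\<in>space (Ms i). \<kappa> (x(i := y)) = \<kappa> x) \<and>
     (\<forall>A\<in>sets (prodX K Ms).
        (\<forall>x\<in>space (prodX K Ms). \<forall>y\<in>space (Ms i). (x \<in> A \<longleftrightarrow> x(i := y) \<in> A)) \<longrightarrow>
        (\<forall>D\<in>sets (Ms i).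
           (\<integral>\<^sup>+ x. indicator A x * emeasure (\<kappa> x) D \<partial>\<pi>)
             = emeasure \<pi> (A \<inter> {x \<in> space (prodX K Ms). x i \<in> D})))"

definition gibbs_step ::
  "nat \<Rightarrow> (nat \<Rightarrow> 'a measure) \<Rightarrow> ((nat \<Rightarrow> 'a) \<Rightarrow> 'a measure) \<Rightarrow> nat \<Rightarrow> (nat \<Rightarrow> 'a) \<Rightarrow> (nat \<Rightarrow> 'a) measure"
  where
  "gibbs_step K Ms \<kappa> i x = distr (\<kappa> x) (prodX K Ms) (\<lambda>y. x(i := y))"

primrec scan_kernel ::
  "'b measure \<Rightarrow> (nat \<Rightarrow> 'b \<Rightarrow> 'b measure) \<Rightarrow> nat \<Rightarrow> 'b \<Rightarrow> 'b measure" where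
  "scan_kernel X P 0 = (\<lambda>x. return X x)"
| "scan_kernel X P (Suc k) = (\<lambda>x. bind (scan_kernel X P k x) (P k))"

definition gibbs_kernel ::
  "nat \<Rightarrow> (nat \<Rightarrow> 'a measure) \<Rightarrow> (nat \<Rightarrow> (nat \<Rightarrow> 'a) \<Rightarrow> 'a measure) \<Rightarrow> (nat \<Rightarrow> 'a) \<Rightarrow> (nat \<Rightarrow> 'a) measure"
  where
  "gibbs_kernel K Ms \<kappa> = scan_kernel (prodX K Ms) (\<lambda>i. gibbs_step K Ms (\<kappa> i) i) K"

definition iter_kernel :: "'b measure \<Rightarrow> ('b \<Rightarrow> 'b measure) \<Rightarrow> nat \<Rightarrow> 'b measure" where
  "iter_kernel \<mu> P t = ((\<lambda>\<nu>. bind \<nu> P) ^^ t) \<mu>"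

definition coordmap :: "nat \<Rightarrow> (nat \<Rightarrow> 'a \<Rightarrow> 'a) \<Rightarrow> (nat \<Rightarrow> 'a) \<Rightarrow> (nat \<Rightarrow> 'a)" where
  "coordmap K \<phi> x = (\<lambda>j\<in>{..<K}. \<phi> j (x j))"

end

theory Submission imports Defs begin
lemma upd_meas: "i < K \<Longrightarrow> (\<lambda>(x,y). x(i:=y)) \<in> prodX K Ms \<Otimes>\<^sub>M Ms i \<rightarrow>\<^sub>M prodX K Ms"
  using measurable_add_dim[of i "{..<K}" Ms] by (simp add: insert_absorb)

lemma upd_meas1:
  assumes i: "i < K" and x: "x \<in> space (prodX K Ms)"
  shows "(\<lambda>y. x(i:=y)) \<in> Ms i \<rightarrow>\<^sub>M prodX K Ms"
  using measurable_Pair2[OF upd_meas[OF i] x] by simp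

lemma space_upd: "i < K \<Longrightarrow> x \<in> space (prodX K Ms) \<Longrightarrow> y \<in> space (Ms i) \<Longrightarrow> x(i:=y) \<in> space (prodX K Ms)"
  by (auto simp: space_PiM PiE_iff extensional_def)

definition inv_set where
  "inv_set K Ms i A \<longleftrightarrow> A \<in> sets (prodX K Ms) \<and>
     (\<forall>x\<in>space (prodX K Ms). \<forall>y\<in>space (Ms i). (x \<in> A \<longleftrightarrow> x(i := y) \<in> A))"

definition genE where
  "genE K Ms i = {A \<inter> {x \<in> space (prodX K Ms). x i \<in> D} | A D. inv_set K Ms i A \<and> D \<in> sets (Ms i)}"

lemma comp_set: "i < K \<Longrightarrow> D \<in> sets (Ms i) \<Longrightarrow> {x \<in> space (prodX K Ms). x i \<in> D} \<in> sets (prodX K Ms)"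
  using measurable_sets[OF measurable_component_singleton[of i "{..<K}" Ms], of D]
  by (simp add: vimage_def Int_def conj_commute)

lemma genE_sub: "i < K \<Longrightarrow> genE K Ms i \<subseteq> sets (prodX K Ms)"
  unfolding genE_def inv_set_def using comp_set by blast

lemma space_inv: "inv_set K Ms i (space (prodX K Ms))" if "i < K"
  unfolding inv_set_def using space_upd[OF that] by (auto dest: spec)

lemma Int_stable_genE: "Int_stable (genE K Ms i)"
proof (rule Int_stableI)
  fix a b assume "a \<in> genE K Ms i" "b \<in> genE K Ms i"
  then obtain A D B E where ab: "a = A \<inter> {x \<in> space (prodX K Ms). x i \<in> D}" "inv_set K Ms i A" "D \<in> sets (Ms i)"
    "b = B \<inter> {x \<in> space (prodX K Ms). x i \<in> E}" "inv_set K Ms i B" "E \<in> sets (Ms i)"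
    unfolding genE_def by blast
  have "inv_set K Ms i (A \<inter> B)" using ab unfolding inv_set_def by auto
  moreover have "a \<inter> b = (A \<inter> B) \<inter> {x \<in> space (prodX K Ms). x i \<in> D \<inter> E}" using ab by auto
  ultimately show "a \<inter> b \<in> genE K Ms i" using ab unfolding genE_def by blast
qed

lemma gen_sets:
  assumes i: "i < K"
  shows "sets (prodX K Ms) = sigma_sets (space (prodX K Ms)) (genE K Ms i)"
proof
  show "sigma_sets (space (prodX K Ms)) (genE K Ms i) \<subseteq> sets (prodX K Ms)"
    using genE_sub[OF i] by (rule sets.sigma_sets_subset)
next
  have "{{f\<in>\<Pi>\<^sub>E i\<in>{..<K}. space (Ms i). f j \<in> A} | j A. j \<in> {..<K} \<and> A \<in> sets (Ms j)} \<subseteq> genE K Ms i"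
  proof
    fix S assume "S \<in> {{f\<in>\<Pi>\<^sub>E i\<in>{..<K}. space (Ms i). f j \<in> A} | j A. j \<in> {..<K} \<and> A \<in> sets (Ms j)}"
    then obtain j A where S: "S = {f\<in>space (prodX K Ms). f j \<in> A}" "j < K" "A \<in> sets (Ms j)"
      by (auto simp: space_PiM)
    show "S \<in> genE K Ms i"
    proof (cases "j = i")
      case True
      then have "S = space (prodX K Ms) \<inter> {x \<in> space (prodX K Ms). x i \<in> A}" using S by auto
      then show ?thesis using S True space_inv[OF i] unfolding genE_def by blast
    next
      case False
      have "inv_set K Ms i S"
        unfolding inv_set_def using S False comp_set[of j K A Ms] space_upd[OF i] by auto
      moreover have "S = S \<inter> {x \<in> space (prodX K Ms). x i \<in> space (Ms i)}"
        using S i by (auto simp: space_PiM)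
      ultimately show ?thesis unfolding genE_def by blast
    qed
  qed
  then show "sets (prodX K Ms) \<subseteq> sigma_sets (space (prodX K Ms)) (genE K Ms i)"
    unfolding sets_PiM_single[of "{..<K}" Ms] space_PiM[symmetric]
    by (rule sigma_sets_mono')
qed

lemma eq_on_gen:
  assumes i: "i < K" and N1: "sets N1 = sets (prodX K Ms)" "finite_measure N1"
    and N2: "sets N2 = sets (prodX K Ms)"
    and eq: "\<And>X. X \<in> genE K Ms i \<Longrightarrow> emeasure N1 X = emeasure N2 X"
  shows "N1 = N2"
proof (rule measure_eqI_generator_eq[OF Int_stable_genE, of K Ms i "space (prodX K Ms)"])
  show "genE K Ms i \<subseteq> Pow (space (prodX K Ms))" using genE_sub[OF i] sets.sets_into_space by blast
  show "sets N1 = sigma_sets (space (prodX K Ms)) (genE K Ms i)" using N1 gen_sets[OF i] by simp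
  show "sets N2 = sigma_sets (space (prodX K Ms)) (genE K Ms i)" using N2 gen_sets[OF i] by simp
  have "space (prodX K Ms) = space (prodX K Ms) \<inter> {x \<in> space (prodX K Ms). x i \<in> space (Ms i)}"
    using i by (auto simp: space_PiM)
  then show "range (\<lambda>_. space (prodX K Ms)) \<subseteq> genE K Ms i" using space_inv[OF i] unfolding genE_def by blast
  show "(\<Union>_::nat. space (prodX K Ms)) = space (prodX K Ms)" by simp
  show "emeasure N1 (space (prodX K Ms)) \<noteq> \<infinity>"
    using finite_measure.emeasure_finite[OF N1(2)] sets_eq_imp_space_eq[OF N1(1)] by simp
qed (rule eq)

lemma step_emeasure:
  assumes i: "i < K" and x: "x \<in> space (prodX K Ms)" and kx: "\<kappa> x \<in> space (prob_algebra (Ms i))"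
    and S: "S \<in> sets (prodX K Ms)"
  shows "emeasure (gibbs_step K Ms \<kappa> i x) S = emeasure (\<kappa> x) {y \<in> space (Ms i). x(i:=y) \<in> S}"
proof -
  have sk: "sets (\<kappa> x) = sets (Ms i)" using kx by (simp add: space_prob_algebra)
  have m: "(\<lambda>y. x(i:=y)) \<in> \<kappa> x \<rightarrow>\<^sub>M prodX K Ms"
    using upd_meas1[OF i x] measurable_cong_sets[OF sk refl] by blast
  show ?thesis unfolding gibbs_step_def
    using emeasure_distr[OF m S] sets_eq_imp_space_eq[OF sk]
    by (simp add: vimage_def Int_def conj_commute)
qed

lemma step_gen:
  assumes i: "i < K" and x: "x \<in> space (prodX K Ms)" and kx: "\<kappa> x \<in> space (prob_algebra (Ms i))"
    and A: "inv_set K Ms i A" and D: "D \<in> sets (Ms i)"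
  shows "emeasure (gibbs_step K Ms \<kappa> i x) (A \<inter> {x \<in> space (prodX K Ms). x i \<in> D})
     = indicator A x * emeasure (\<kappa> x) D"
proof -
  have S: "A \<inter> {x \<in> space (prodX K Ms). x i \<in> D} \<in> sets (prodX K Ms)"
    using A comp_set[where i=i and K=K and D=D and Ms=Ms, OF i D] unfolding inv_set_def by blast
  have Dsub: "D \<subseteq> space (Ms i)" using D sets.sets_into_space by blast
  have "{y \<in> space (Ms i). x(i:=y) \<in> A \<inter> {x \<in> space (prodX K Ms). x i \<in> D}} = (if x \<in> A then D else {})"
    using A x Dsub space_upd[OF i x] unfolding inv_set_def by auto
  then show ?thesis using step_emeasure[where K=K and Ms=Ms and i=i and x=x and \<kappa>=\<kappa>, OF i x kx S] by (simp add: indicator_def)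
qed

lemma ae_not_less:
  assumes f: "f \<in> borel_measurable M" and g: "g \<in> borel_measurable M"
    and A: "A = {x\<in>space M. f x < g x}"
    and eq: "(\<integral>\<^sup>+x. indicator A x * f x \<partial>M) = (\<integral>\<^sup>+x. indicator A x * g x \<partial>M)"
    and fin: "(\<integral>\<^sup>+x. indicator A x * f x \<partial>M) \<noteq> \<infinity>"
  shows "AE x in M. \<not> f x < g x"
proof -
  note [measurable] = f g
  have Am: "A \<in> sets M" unfolding A using f g by measurable
  define h where "h x = indicator A x * (g x - f x)" for x
  have hm: "h \<in> borel_measurable M" unfolding h_def using Am f g by measurable
  have "(\<integral>\<^sup>+x. indicator A x * g x \<partial>M) = (\<integral>\<^sup>+x. indicator A x * f x + h x \<partial>M)"
  proof (rule nn_integral_cong)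
    fix x assume "x \<in> space M"
    show "indicator A x * g x = indicator A x * f x + h x"
      unfolding h_def A by (cases "f x < g x") (auto simp: indicator_def add_diff_self_ennreal less_imp_le)
  qed
  also have "\<dots> = (\<integral>\<^sup>+x. indicator A x * f x \<partial>M) + (\<integral>\<^sup>+x. h x \<partial>M)"
    by (rule nn_integral_add) (use Am hm in auto)
  finally have "(\<integral>\<^sup>+x. h x \<partial>M) = 0" using eq fin
    using ennreal_add_left_cancel[of "(\<integral>\<^sup>+x. indicator A x * f x \<partial>M)" "(\<integral>\<^sup>+x. h x \<partial>M)" 0] by simp
  then have "AE x in M. h x = 0" using nn_integral_0_iff_AE[OF hm] by simp
  then show ?thesis
  proof (rule AE_mp[OF _ AE_I2[OF impI]])
    fix x assume x: "x \<in> space M" and "h x = 0"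
    then show "\<not> f x < g x" unfolding h_def A using diff_gr0_ennreal[of "f x" "g x"]
      by (auto simp: indicator_def)
  qed
qed
lemma cd_kmeas: "cond_dist K Ms i \<pi> \<kappa> \<Longrightarrow> \<kappa> \<in> prodX K Ms \<rightarrow>\<^sub>M prob_algebra (Ms i)"
  unfolding cond_dist_def by (elim conjE)

lemma cd_kx: "cond_dist K Ms i \<pi> \<kappa> \<Longrightarrow> x \<in> space (prodX K Ms) \<Longrightarrow> \<kappa> x \<in> space (prob_algebra (Ms i))"
  by (rule measurable_space[OF cd_kmeas])

lemma cd_meas: "cond_dist K Ms i \<pi> \<kappa> \<Longrightarrow> D \<in> sets (Ms i) \<Longrightarrow> (\<lambda>x. emeasure (\<kappa> x) D) \<in> borel_measurable (prodX K Ms)"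
  by (rule measurable_compose[OF measurable_prob_algebraD[OF cd_kmeas] measurable_emeasure_subprob_algebra])

lemma cd_int: "cond_dist K Ms i \<pi> \<kappa> \<Longrightarrow> inv_set K Ms i A \<Longrightarrow> D \<in> sets (Ms i) \<Longrightarrow>
  (\<integral>\<^sup>+ x. indicator A x * emeasure (\<kappa> x) D \<partial>\<pi>) = emeasure \<pi> (A \<inter> {x \<in> space (prodX K Ms). x i \<in> D})"
  unfolding cond_dist_def inv_set_def by blast

lemma cd_inv: "cond_dist K Ms i \<pi> \<kappa> \<Longrightarrow> x \<in> space (prodX K Ms) \<Longrightarrow> y \<in> space (Ms i) \<Longrightarrow> \<kappa> (x(i:=y)) = \<kappa> x"
  unfolding cond_dist_def by blast

lemma bind_prob:
  assumes \<pi>: "\<pi> \<in> space (prob_algebra X)" and P: "P \<in> X \<rightarrow>\<^sub>M prob_algebra Y"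
  shows "bind \<pi> P \<in> space (prob_algebra Y)"
proof -
  have ps: "prob_space \<pi>" and s: "sets \<pi> = sets X" using \<pi> by (auto simp: space_prob_algebra)
  have "prob_space (\<pi> \<bind> P)" by (rule prob_space_bind'[OF \<pi> P])
  moreover have "sets (\<pi> \<bind> P) = sets Y"
  proof (rule sets_bind_measurable)
    show "P \<in> \<pi> \<rightarrow>\<^sub>M subprob_algebra Y"
      using measurable_prob_algebraD[OF P] measurable_cong_sets[OF s refl] by blast
    show "space \<pi> \<noteq> {}" using prob_space.not_empty[OF ps] .
  qed
  ultimately show ?thesis by (simp add: space_prob_algebra)
qed

lemma pa_finite: "\<pi> \<in> space (prob_algebra X) \<Longrightarrow> finite_measure \<pi>"
  by (simp add: space_prob_algebra prob_space_def)

lemma gibbs_step_meas: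
  assumes "i < K" "\<kappa> \<in> prodX K Ms \<rightarrow>\<^sub>M prob_algebra (Ms i)"
  shows "gibbs_step K Ms \<kappa> i \<in> prodX K Ms \<rightarrow>\<^sub>M prob_algebra (prodX K Ms)"
proof -
  have "(\<lambda>x. distr (\<kappa> x) (prodX K Ms) (\<lambda>y. x(i:=y))) \<in> prodX K Ms \<rightarrow>\<^sub>M prob_algebra (prodX K Ms)"
    by (rule measurable_distr_prob_space2[OF assms(2)]) (fact upd_meas[OF assms(1)])
  then show ?thesis unfolding gibbs_step_def[abs_def] .
qed

lemma invariance:
  assumes i: "i < K" and \<pi>: "\<pi> \<in> space (prob_algebra (prodX K Ms))" and cd: "cond_dist K Ms i \<pi> \<kappa>"
  shows "bind \<pi> (gibbs_step K Ms \<kappa> i) = \<pi>"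
proof -
  have Pm: "gibbs_step K Ms \<kappa> i \<in> prodX K Ms \<rightarrow>\<^sub>M prob_algebra (prodX K Ms)"
    by (rule gibbs_step_meas[OF i cd_kmeas[OF cd]])
  have b: "bind \<pi> (gibbs_step K Ms \<kappa> i) \<in> space (prob_algebra (prodX K Ms))"
    by (rule bind_prob[OF \<pi> Pm])
  have s\<pi>: "sets \<pi> = sets (prodX K Ms)" using \<pi> by (simp add: space_prob_algebra)
  show ?thesis
  proof (rule eq_on_gen[OF i])
    show "sets (bind \<pi> (gibbs_step K Ms \<kappa> i)) = sets (prodX K Ms)" using b by (simp add: space_prob_algebra)
    show "finite_measure (bind \<pi> (gibbs_step K Ms \<kappa> i))" by (rule pa_finite[OF b])
    show "sets \<pi> = sets (prodX K Ms)" by (fact s\<pi>)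
    fix X assume "X \<in> genE K Ms i"
    then obtain A D where X: "X = A \<inter> {x \<in> space (prodX K Ms). x i \<in> D}" and A: "inv_set K Ms i A"
      and D: "D \<in> sets (Ms i)" unfolding genE_def by blast
    have Xs: "X \<in> sets (prodX K Ms)" using genE_sub[OF i] \<open>X \<in> genE K Ms i\<close> by blast
    have "emeasure (bind \<pi> (gibbs_step K Ms \<kappa> i)) X = (\<integral>\<^sup>+x. emeasure (gibbs_step K Ms \<kappa> i x) X \<partial>\<pi>)"
      by (rule emeasure_bind_prob_algebra[OF \<pi> Pm Xs])
    also have "\<dots> = (\<integral>\<^sup>+x. indicator A x * emeasure (\<kappa> x) D \<partial>\<pi>)"
    proof (rule nn_integral_cong)
      fix x assume "x \<in> space \<pi>"
      then have x: "x \<in> space (prodX K Ms)" using sets_eq_imp_space_eq[OF s\<pi>] by simp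
      show "emeasure (gibbs_step K Ms \<kappa> i x) X = indicator A x * emeasure (\<kappa> x) D"
        unfolding X by (rule step_gen[where \<kappa>=\<kappa>, OF i x cd_kx[OF cd x] A D])
    qed
    also have "\<dots> = emeasure \<pi> X" unfolding X by (rule cd_int[OF cd A D])
    finally show "emeasure (bind \<pi> (gibbs_step K Ms \<kappa> i)) X = emeasure \<pi> X" .
  qed
qed

lemma cd_ae_le:
  assumes i: "i < K" and \<pi>: "\<pi> \<in> space (prob_algebra (prodX K Ms))"
    and cd1: "cond_dist K Ms i \<pi> \<kappa>1" and cd2: "cond_dist K Ms i \<pi> \<kappa>2" and D: "D \<in> sets (Ms i)"
  shows "AE x in \<pi>. \<not> emeasure (\<kappa>1 x) D < emeasure (\<kappa>2 x) D"
proof -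
  have s\<pi>: "sets \<pi> = sets (prodX K Ms)" using \<pi> by (simp add: space_prob_algebra)
  note sp = sets_eq_imp_space_eq[OF s\<pi>]
  have f: "(\<lambda>x. emeasure (\<kappa>1 x) D) \<in> borel_measurable \<pi>"
    using cd_meas[OF cd1 D] measurable_cong_sets[OF s\<pi> refl] by blast
  have g: "(\<lambda>x. emeasure (\<kappa>2 x) D) \<in> borel_measurable \<pi>"
    using cd_meas[OF cd2 D] measurable_cong_sets[OF s\<pi> refl] by blast
  define A where "A = {x\<in>space \<pi>. emeasure (\<kappa>1 x) D < emeasure (\<kappa>2 x) D}"
  have As: "A \<in> sets \<pi>" unfolding A_def using f g by measurable
  have Ainv: "inv_set K Ms i A"
    unfolding inv_set_def
  proof (intro conjI ballI)
    show "A \<in> sets (prodX K Ms)" using As s\<pi> by simp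
    fix x y assume x: "x \<in> space (prodX K Ms)" and y: "y \<in> space (Ms i)"
    show "x \<in> A \<longleftrightarrow> x(i := y) \<in> A"
      unfolding A_def sp using x y space_upd[OF i x y] cd_inv[OF cd1 x y] cd_inv[OF cd2 x y] by simp
  qed
  have e1: "(\<integral>\<^sup>+x. indicator A x * emeasure (\<kappa>1 x) D \<partial>\<pi>) = emeasure \<pi> (A \<inter> {x \<in> space (prodX K Ms). x i \<in> D})"
    by (rule cd_int[OF cd1 Ainv D])
  have e2: "(\<integral>\<^sup>+x. indicator A x * emeasure (\<kappa>2 x) D \<partial>\<pi>) = emeasure \<pi> (A \<inter> {x \<in> space (prodX K Ms). x i \<in> D})"
    by (rule cd_int[OF cd2 Ainv D])
  have fin: "emeasure \<pi> (A \<inter> {x \<in> space (prodX K Ms). x i \<in> D}) \<noteq> \<infinity>"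
    using finite_measure.emeasure_finite[OF pa_finite[OF \<pi>]] by simp
  show ?thesis
    by (rule ae_not_less[OF f g A_def]) (use e1 e2 fin in simp_all)
qed

lemma cd_ae:
  assumes i: "i < K" and \<pi>: "\<pi> \<in> space (prob_algebra (prodX K Ms))"
    and cd1: "cond_dist K Ms i \<pi> \<kappa>1" and cd2: "cond_dist K Ms i \<pi> \<kappa>2" and D: "D \<in> sets (Ms i)"
  shows "AE x in \<pi>. emeasure (\<kappa>1 x) D = emeasure (\<kappa>2 x) D"
  using cd_ae_le[OF i \<pi> cd1 cd2 D] cd_ae_le[OF i \<pi> cd2 cd1 D]
  by eventually_elim (simp add: not_less antisym)

lemma ae_transfer:
  assumes \<nu>: "\<nu> \<in> nbhd X \<pi> M" and \<pi>: "\<pi> \<in> space (prob_algebra X)" and ae: "AE x in \<pi>. P x"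
  shows "AE x in \<nu>. P x"
proof -
  have \<nu>p: "\<nu> \<in> space (prob_algebra X)" and le: "\<And>A. A \<in> sets X \<Longrightarrow> measure \<nu> A \<le> M * measure \<pi> A"
    using \<nu> by (auto simp: nbhd_def)
  have s\<pi>: "sets \<pi> = sets X" using \<pi> by (simp add: space_prob_algebra)
  have s\<nu>: "sets \<nu> = sets X" using \<nu>p by (simp add: space_prob_algebra)
  from ae obtain N where N: "{x \<in> space \<pi>. \<not> P x} \<subseteq> N" "emeasure \<pi> N = 0" "N \<in> sets \<pi>"
    by (rule AE_E)
  have "measure \<pi> N = 0" using N(2) by (simp add: measure_def)
  then have "measure \<nu> N \<le> 0" using le[of N] N(3) s\<pi> by simp
  then have "measure \<nu> N = 0" using measure_nonneg[of \<nu> N] by linarith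
  then have "emeasure \<nu> N = 0"
    using finite_measure.emeasure_eq_measure[OF pa_finite[OF \<nu>p]] by simp
  moreover have "space \<nu> = space \<pi>" using sets_eq_imp_space_eq s\<pi> s\<nu> by metis
  ultimately show ?thesis using N s\<pi> s\<nu> by (intro AE_I[of _ _ N]) auto
qed

lemma uniq:
  assumes i: "i < K" and \<pi>: "\<pi> \<in> space (prob_algebra (prodX K Ms))"
    and cd1: "cond_dist K Ms i \<pi> \<kappa>1" and cd2: "cond_dist K Ms i \<pi> \<kappa>2"
    and \<nu>: "\<nu> \<in> nbhd (prodX K Ms) \<pi> M"
  shows "bind \<nu> (gibbs_step K Ms \<kappa>1 i) = bind \<nu> (gibbs_step K Ms \<kappa>2 i)"
proof -
  have \<nu>p: "\<nu> \<in> space (prob_algebra (prodX K Ms))" using \<nu> by (simp add: nbhd_def)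
  have s\<nu>: "sets \<nu> = sets (prodX K Ms)" using \<nu>p by (simp add: space_prob_algebra)
  note sp = sets_eq_imp_space_eq[OF s\<nu>]
  have P1: "gibbs_step K Ms \<kappa>1 i \<in> prodX K Ms \<rightarrow>\<^sub>M prob_algebra (prodX K Ms)"
    by (rule gibbs_step_meas[OF i cd_kmeas[OF cd1]])
  have P2: "gibbs_step K Ms \<kappa>2 i \<in> prodX K Ms \<rightarrow>\<^sub>M prob_algebra (prodX K Ms)"
    by (rule gibbs_step_meas[OF i cd_kmeas[OF cd2]])
  have b1: "bind \<nu> (gibbs_step K Ms \<kappa>1 i) \<in> space (prob_algebra (prodX K Ms))"
    by (rule bind_prob[OF \<nu>p P1])
  have b2: "bind \<nu> (gibbs_step K Ms \<kappa>2 i) \<in> space (prob_algebra (prodX K Ms))"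
    by (rule bind_prob[OF \<nu>p P2])
  show ?thesis
  proof (rule eq_on_gen[OF i])
    show "sets (bind \<nu> (gibbs_step K Ms \<kappa>1 i)) = sets (prodX K Ms)" using b1 by (simp add: space_prob_algebra)
    show "finite_measure (bind \<nu> (gibbs_step K Ms \<kappa>1 i))" by (rule pa_finite[OF b1])
    show "sets (bind \<nu> (gibbs_step K Ms \<kappa>2 i)) = sets (prodX K Ms)" using b2 by (simp add: space_prob_algebra)
    fix X assume "X \<in> genE K Ms i"
    then obtain A D where X: "X = A \<inter> {x \<in> space (prodX K Ms). x i \<in> D}" and A: "inv_set K Ms i A"
      and D: "D \<in> sets (Ms i)" unfolding genE_def by blast
    have Xs: "X \<in> sets (prodX K Ms)" using genE_sub[OF i] \<open>X \<in> genE K Ms i\<close> by blast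
    have ae: "AE x in \<nu>. emeasure (\<kappa>1 x) D = emeasure (\<kappa>2 x) D"
      by (rule ae_transfer[OF \<nu> \<pi> cd_ae[OF i \<pi> cd1 cd2 D]])
    have "emeasure (bind \<nu> (gibbs_step K Ms \<kappa>1 i)) X = (\<integral>\<^sup>+x. emeasure (gibbs_step K Ms \<kappa>1 i x) X \<partial>\<nu>)"
      by (rule emeasure_bind_prob_algebra[OF \<nu>p P1 Xs])
    also have "\<dots> = (\<integral>\<^sup>+x. emeasure (gibbs_step K Ms \<kappa>2 i x) X \<partial>\<nu>)"
    proof (rule nn_integral_cong_AE)
      show "AE x in \<nu>. emeasure (gibbs_step K Ms \<kappa>1 i x) X = emeasure (gibbs_step K Ms \<kappa>2 i x) X"
        using ae
      proof (rule AE_mp[OF _ AE_I2[OF impI]])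
        fix x assume "x \<in> space \<nu>" and e: "emeasure (\<kappa>1 x) D = emeasure (\<kappa>2 x) D"
        then have x: "x \<in> space (prodX K Ms)" using sp by simp
        show "emeasure (gibbs_step K Ms \<kappa>1 i x) X = emeasure (gibbs_step K Ms \<kappa>2 i x) X"
          unfolding X
          using step_gen[where \<kappa>=\<kappa>1, OF i x cd_kx[OF cd1 x] A D]
            step_gen[where \<kappa>=\<kappa>2, OF i x cd_kx[OF cd2 x] A D] e by simp
      qed
    qed
    also have "\<dots> = emeasure (bind \<nu> (gibbs_step K Ms \<kappa>2 i)) X"
      by (rule emeasure_bind_prob_algebra[OF \<nu>p P2 Xs, symmetric])
    finally show "emeasure (bind \<nu> (gibbs_step K Ms \<kappa>1 i)) X = emeasure (bind \<nu> (gibbs_step K Ms \<kappa>2 i)) X" .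
  qed
qed

lemma nbhd_le_scale:
  assumes \<nu>: "\<nu> \<in> nbhd X \<pi> M" and \<pi>: "\<pi> \<in> space (prob_algebra X)" and M: "0 \<le> M"
  shows "\<nu> \<le> scale_measure (ennreal M) \<pi>"
proof -
  have \<nu>p: "\<nu> \<in> space (prob_algebra X)" and le: "\<And>A. A \<in> sets X \<Longrightarrow> measure \<nu> A \<le> M * measure \<pi> A"
    using \<nu> by (auto simp: nbhd_def)
  have s\<pi>: "sets \<pi> = sets X" using \<pi> by (simp add: space_prob_algebra)
  have s\<nu>: "sets \<nu> = sets X" using \<nu>p by (simp add: space_prob_algebra)
  have em: "emeasure \<nu> A \<le> ennreal M * emeasure \<pi> A" for A
  proof (cases "A \<in> sets X")
    case True
    have "emeasure \<nu> A = ennreal (measure \<nu> A)"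
      using finite_measure.emeasure_eq_measure[OF pa_finite[OF \<nu>p]] by simp
    also have "\<dots> \<le> ennreal (M * measure \<pi> A)" using le[OF True] by (simp add: ennreal_leI)
    also have "\<dots> = ennreal M * emeasure \<pi> A"
      using finite_measure.emeasure_eq_measure[OF pa_finite[OF \<pi>]] M by (simp add: ennreal_mult)
    finally show ?thesis .
  next
    case False
    then show ?thesis using s\<nu> by (simp add: emeasure_notin_sets)
  qed
  show ?thesis unfolding le_measure_iff
    using s\<pi> s\<nu> sets_eq_imp_space_eq[of \<nu> \<pi>] sets_eq_imp_space_eq[OF sets_scale_measure[of "ennreal M" \<pi>]] em by (auto simp: le_fun_def)
qed

lemma preserve:
  assumes i: "i < K" and \<pi>: "\<pi> \<in> space (prob_algebra (prodX K Ms))"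
    and cd: "cond_dist K Ms i \<pi> \<kappa>" and \<nu>: "\<nu> \<in> nbhd (prodX K Ms) \<pi> M" and M: "0 \<le> M"
  shows "bind \<nu> (gibbs_step K Ms \<kappa> i) \<in> nbhd (prodX K Ms) \<pi> M"
proof -
  have \<nu>p: "\<nu> \<in> space (prob_algebra (prodX K Ms))" using \<nu> by (simp add: nbhd_def)
  have s\<pi>: "sets \<pi> = sets (prodX K Ms)" using \<pi> by (simp add: space_prob_algebra)
  have s\<nu>: "sets \<nu> = sets (prodX K Ms)" using \<nu>p by (simp add: space_prob_algebra)
  have P: "gibbs_step K Ms \<kappa> i \<in> prodX K Ms \<rightarrow>\<^sub>M prob_algebra (prodX K Ms)"
    by (rule gibbs_step_meas[OF i cd_kmeas[OF cd]])
  have b: "bind \<nu> (gibbs_step K Ms \<kappa> i) \<in> space (prob_algebra (prodX K Ms))"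
    by (rule bind_prob[OF \<nu>p P])
  have le: "measure (bind \<nu> (gibbs_step K Ms \<kappa> i)) A \<le> M * measure \<pi> A" if A: "A \<in> sets (prodX K Ms)" for A
  proof -
    have fm: "(\<lambda>x. emeasure (gibbs_step K Ms \<kappa> i x) A) \<in> borel_measurable \<pi>"
      using measurable_compose[OF measurable_prob_algebraD[OF P] measurable_emeasure_subprob_algebra[OF A]]
        measurable_cong_sets[OF s\<pi> refl] by blast
    have "emeasure (bind \<nu> (gibbs_step K Ms \<kappa> i)) A = (\<integral>\<^sup>+x. emeasure (gibbs_step K Ms \<kappa> i x) A \<partial>\<nu>)"
      by (rule emeasure_bind_prob_algebra[OF \<nu>p P A])
    also have "\<dots> \<le> (\<integral>\<^sup>+x. emeasure (gibbs_step K Ms \<kappa> i x) A \<partial>scale_measure (ennreal M) \<pi>)"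
      by (rule nn_integral_mono_measure) (use s\<pi> s\<nu> nbhd_le_scale[OF \<nu> \<pi> M] in auto)
    also have "\<dots> = ennreal M * (\<integral>\<^sup>+x. emeasure (gibbs_step K Ms \<kappa> i x) A \<partial>\<pi>)"
      by (rule nn_integral_scale_measure[OF fm])
    also have "(\<integral>\<^sup>+x. emeasure (gibbs_step K Ms \<kappa> i x) A \<partial>\<pi>) = emeasure (bind \<pi> (gibbs_step K Ms \<kappa> i)) A"
      by (rule emeasure_bind_prob_algebra[OF \<pi> P A, symmetric])
    also have "\<dots> = emeasure \<pi> A" using invariance[OF i \<pi> cd] by simp
    finally have "emeasure (bind \<nu> (gibbs_step K Ms \<kappa> i)) A \<le> ennreal M * emeasure \<pi> A" .
    then have "ennreal (measure (bind \<nu> (gibbs_step K Ms \<kappa> i)) A) \<le> ennreal (M * measure \<pi> A)"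
      using finite_measure.emeasure_eq_measure[OF pa_finite[OF \<pi>]]
        finite_measure.emeasure_eq_measure[OF pa_finite[OF b]] M by (simp add: ennreal_mult)
    then show ?thesis using M by (simp add: ennreal_le_iff)
  qed
  show ?thesis using b le by (simp add: nbhd_def)
qed

locale transp =
  fixes K :: nat and Ms :: "nat \<Rightarrow> 'a measure" and \<phi> :: "nat \<Rightarrow> 'a \<Rightarrow> 'a"
  assumes \<phi>_meas: "\<And>j. j < K \<Longrightarrow> \<phi> j \<in> Ms j \<rightarrow>\<^sub>M Ms j"
    and \<phi>_inj: "\<And>j. j < K \<Longrightarrow> inj_on (\<phi> j) (space (Ms j))"
    and \<phi>_img: "\<And>j A. j < K \<Longrightarrow> A \<in> sets (Ms j) \<Longrightarrow> \<phi> j ` A \<in> sets (Ms j)"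
    and ne: "\<And>j. j < K \<Longrightarrow> space (Ms j) \<noteq> {}"
begin

definition \<psi> :: "nat \<Rightarrow> 'a \<Rightarrow> 'a" where
  "\<psi> j z = (if z \<in> \<phi> j ` space (Ms j) then the_inv_into (space (Ms j)) (\<phi> j) z else (SOME w. w \<in> space (Ms j)))"

abbreviation "\<Phi> \<equiv> coordmap K \<phi>"
abbreviation "\<Psi> \<equiv> coordmap K \<psi>"

lemma \<phi>_space: "j < K \<Longrightarrow> w \<in> space (Ms j) \<Longrightarrow> \<phi> j w \<in> space (Ms j)"
  using measurable_space[OF \<phi>_meas] by blast

lemma \<psi>_space: assumes j: "j < K" shows "\<psi> j z \<in> space (Ms j)"
proof -
  have "\<exists>w. w \<in> space (Ms j)" using ne[OF j] by blast
  then have "(SOME w. w \<in> space (Ms j)) \<in> space (Ms j)" by (rule someI_ex)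
  moreover have "z \<in> \<phi> j ` space (Ms j) \<Longrightarrow> the_inv_into (space (Ms j)) (\<phi> j) z \<in> space (Ms j)"
    by (rule the_inv_into_into[OF \<phi>_inj[OF j]]) auto
  ultimately show ?thesis unfolding \<psi>_def by auto
qed

lemma \<psi>_\<phi>: "j < K \<Longrightarrow> w \<in> space (Ms j) \<Longrightarrow> \<psi> j (\<phi> j w) = w"
  unfolding \<psi>_def using the_inv_into_f_f[OF \<phi>_inj] by auto

lemma \<psi>_meas: "j < K \<Longrightarrow> \<psi> j \<in> Ms j \<rightarrow>\<^sub>M Ms j"
proof (rule measurableI)
  fix z assume "j < K" "z \<in> space (Ms j)" then show "\<psi> j z \<in> space (Ms j)" using \<psi>_space by blast
next
  fix E assume j: "j < K" and E: "E \<in> sets (Ms j)"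
  have Esub: "E \<subseteq> space (Ms j)" using E sets.sets_into_space by blast
  have "\<psi> j -` E \<inter> space (Ms j) = \<phi> j ` E \<union> (if (SOME w. w \<in> space (Ms j)) \<in> E then space (Ms j) - \<phi> j ` space (Ms j) else {})"
  proof (intro set_eqI iffI)
    fix z assume z: "z \<in> \<psi> j -` E \<inter> space (Ms j)"
    show "z \<in> \<phi> j ` E \<union> (if (SOME w. w \<in> space (Ms j)) \<in> E then space (Ms j) - \<phi> j ` space (Ms j) else {})"
    proof (cases "z \<in> \<phi> j ` space (Ms j)")
      case True
      then obtain w where w: "w \<in> space (Ms j)" "z = \<phi> j w" by blast
      then show ?thesis using z \<psi>_\<phi>[OF j w(1)] by auto
    next
      case False
      then show ?thesis using z unfolding \<psi>_def by auto
    qed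
  next
    fix z assume z: "z \<in> \<phi> j ` E \<union> (if (SOME w. w \<in> space (Ms j)) \<in> E then space (Ms j) - \<phi> j ` space (Ms j) else {})"
    show "z \<in> \<psi> j -` E \<inter> space (Ms j)"
    proof (cases "z \<in> \<phi> j ` E")
      case True
      then obtain w where w: "w \<in> E" "z = \<phi> j w" by blast
      then show ?thesis using \<psi>_\<phi>[OF j] Esub \<phi>_space[OF j] by auto
    next
      case False
      then show ?thesis using z unfolding \<psi>_def by (auto split: if_splits)
    qed
  qed
  also have "\<dots> \<in> sets (Ms j)"
    using \<phi>_img[OF j E] \<phi>_img[OF j sets.top[of "Ms j"]] by auto
  finally show "\<psi> j -` E \<inter> space (Ms j) \<in> sets (Ms j)" .
qed

lemma coordmap_eq: "coordmap K f = (\<lambda>x. \<lambda>j\<in>{..<K}. f j (x j))"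
  by (rule ext) (simp add: coordmap_def)

lemma cm_meas:
  assumes "\<And>j. j < K \<Longrightarrow> f j \<in> Ms j \<rightarrow>\<^sub>M Ms j"
  shows "coordmap K f \<in> prodX K Ms \<rightarrow>\<^sub>M prodX K Ms"
  unfolding coordmap_eq
proof (rule measurable_restrict)
  fix j assume "j \<in> {..<K}"
  then show "(\<lambda>x. f j (x j)) \<in> prodX K Ms \<rightarrow>\<^sub>M Ms j"
    by (intro measurable_compose[OF measurable_component_singleton[of j "{..<K}" Ms] assms]) auto
qed

lemma \<Phi>_meas: "\<Phi> \<in> prodX K Ms \<rightarrow>\<^sub>M prodX K Ms" by (rule cm_meas[OF \<phi>_meas])
lemma \<Psi>_meas: "\<Psi> \<in> prodX K Ms \<rightarrow>\<^sub>M prodX K Ms" by (rule cm_meas[OF \<psi>_meas])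

lemma \<Phi>_space: "x \<in> space (prodX K Ms) \<Longrightarrow> \<Phi> x \<in> space (prodX K Ms)"
  using measurable_space[OF \<Phi>_meas] by blast

lemma \<Psi>_space: "x \<in> space (prodX K Ms) \<Longrightarrow> \<Psi> x \<in> space (prodX K Ms)"
  using measurable_space[OF \<Psi>_meas] by blast

lemma \<Psi>\<Phi>: "x \<in> space (prodX K Ms) \<Longrightarrow> \<Psi> (\<Phi> x) = x"
  by (rule ext) (auto simp: coordmap_def space_PiM PiE_iff extensional_def \<psi>_\<phi>)

lemma \<Phi>\<Psi>: "x \<in> space (prodX K Ms) \<Longrightarrow> (\<forall>j<K. x j \<in> \<phi> j ` space (Ms j)) \<Longrightarrow> \<Phi> (\<Psi> x) = x"
  by (rule ext) (auto simp: coordmap_def space_PiM PiE_iff extensional_def \<psi>_\<phi>)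

lemma \<Phi>_upd: "i < K \<Longrightarrow> \<Phi> (x(i:=y)) = (\<Phi> x)(i := \<phi> i y)"
  by (rule ext) (auto simp: coordmap_def)

lemma \<Psi>_upd: "i < K \<Longrightarrow> \<Psi> (x(i:=y)) = (\<Psi> x)(i := \<psi> i y)"
  by (rule ext) (auto simp: coordmap_def)

end

context transp begin

definition kt :: "((nat \<Rightarrow> 'a) \<Rightarrow> 'a measure) \<Rightarrow> nat \<Rightarrow> (nat \<Rightarrow> 'a) \<Rightarrow> 'a measure" where
  "kt \<kappa> i x = distr (\<kappa> (\<Psi> x)) (Ms i) (\<phi> i)"

lemma kt_meas:
  assumes i: "i < K" and k: "\<kappa> \<in> prodX K Ms \<rightarrow>\<^sub>M prob_algebra (Ms i)"
  shows "kt \<kappa> i \<in> prodX K Ms \<rightarrow>\<^sub>M prob_algebra (Ms i)"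
proof -
  have "(\<lambda>x. distr ((\<kappa> \<circ> \<Psi>) x) (Ms i) ((\<lambda>x y. \<phi> i y) x)) \<in> prodX K Ms \<rightarrow>\<^sub>M prob_algebra (Ms i)"
  proof (rule measurable_distr_prob_space2)
    show "\<kappa> \<circ> \<Psi> \<in> prodX K Ms \<rightarrow>\<^sub>M prob_algebra (Ms i)" by (rule measurable_comp[OF \<Psi>_meas k])
    show "(\<lambda>(x, y). \<phi> i y) \<in> prodX K Ms \<Otimes>\<^sub>M Ms i \<rightarrow>\<^sub>M Ms i"
      using measurable_compose[OF measurable_snd \<phi>_meas[OF i]] by (simp add: case_prod_beta')
  qed
  then show ?thesis unfolding kt_def[abs_def] by simp
qed

lemma emeasure_kt:
  assumes i: "i < K" and kx: "\<kappa> (\<Psi> x) \<in> space (prob_algebra (Ms i))" and D: "D \<in> sets (Ms i)"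
  shows "emeasure (kt \<kappa> i x) D = emeasure (\<kappa> (\<Psi> x)) (\<phi> i -` D \<inter> space (Ms i))"
proof -
  have sk: "sets (\<kappa> (\<Psi> x)) = sets (Ms i)" using kx by (simp add: space_prob_algebra)
  have m: "\<phi> i \<in> \<kappa> (\<Psi> x) \<rightarrow>\<^sub>M Ms i" using \<phi>_meas[OF i] measurable_cong_sets[OF sk refl] by blast
  show ?thesis unfolding kt_def using emeasure_distr[OF m D] sets_eq_imp_space_eq[OF sk] by simp
qed

lemma cd_transport:
  assumes i: "i < K" and \<pi>: "\<pi> \<in> space (prob_algebra (prodX K Ms))" and cd: "cond_dist K Ms i \<pi> \<kappa>"
  shows "cond_dist K Ms i (distr \<pi> (prodX K Ms) \<Phi>) (kt \<kappa> i)"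
  unfolding cond_dist_def
proof (intro conjI ballI impI)
  have s\<pi>: "sets \<pi> = sets (prodX K Ms)" using \<pi> by (simp add: space_prob_algebra)
  note sp = sets_eq_imp_space_eq[OF s\<pi>]
  have km: "kt \<kappa> i \<in> prodX K Ms \<rightarrow>\<^sub>M prob_algebra (Ms i)" by (rule kt_meas[OF i cd_kmeas[OF cd]])
  then show "kt \<kappa> i \<in> prodX K Ms \<rightarrow>\<^sub>M prob_algebra (Ms i)" .
  fix x y assume x: "x \<in> space (prodX K Ms)" and y: "y \<in> space (Ms i)"
  show "kt \<kappa> i (x(i := y)) = kt \<kappa> i x"
    unfolding kt_def \<Psi>_upd[OF i] using cd_inv[OF cd \<Psi>_space[OF x] \<psi>_space[OF i]] by simp
next
  have s\<pi>: "sets \<pi> = sets (prodX K Ms)" using \<pi> by (simp add: space_prob_algebra)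
  note sp = sets_eq_imp_space_eq[OF s\<pi>]
  have km: "kt \<kappa> i \<in> prodX K Ms \<rightarrow>\<^sub>M prob_algebra (Ms i)" by (rule kt_meas[OF i cd_kmeas[OF cd]])
  fix A D assume A: "A \<in> sets (prodX K Ms)"
    and Ainv: "\<forall>x\<in>space (prodX K Ms). \<forall>y\<in>space (Ms i). (x \<in> A) = (x(i := y) \<in> A)"
    and D: "D \<in> sets (Ms i)"
  define A' where "A' = \<Phi> -` A \<inter> space (prodX K Ms)"
  define D' where "D' = \<phi> i -` D \<inter> space (Ms i)"
  have D': "D' \<in> sets (Ms i)" unfolding D'_def using measurable_sets[OF \<phi>_meas[OF i] D] .
  have A'inv: "inv_set K Ms i A'"
    unfolding inv_set_def
  proof (intro conjI ballI)
    show "A' \<in> sets (prodX K Ms)" unfolding A'_def using measurable_sets[OF \<Phi>_meas A] .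
    fix x y assume x: "x \<in> space (prodX K Ms)" and y: "y \<in> space (Ms i)"
    show "x \<in> A' \<longleftrightarrow> x(i := y) \<in> A'"
      unfolding A'_def using Ainv \<Phi>_space[OF x] \<phi>_space[OF i y] space_upd[OF i x y] x \<Phi>_upd[OF i, of x y] by auto
  qed
  have f1: "(\<lambda>x. indicator A x * emeasure (kt \<kappa> i x) D) \<in> borel_measurable (prodX K Ms)"
    using A measurable_compose[OF measurable_prob_algebraD[OF km] measurable_emeasure_subprob_algebra[OF D]]
    by measurable
  have "(\<integral>\<^sup>+ x. indicator A x * emeasure (kt \<kappa> i x) D \<partial>distr \<pi> (prodX K Ms) \<Phi>)
      = (\<integral>\<^sup>+ x. indicator A (\<Phi> x) * emeasure (kt \<kappa> i (\<Phi> x)) D \<partial>\<pi>)"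
  proof (rule nn_integral_distr)
    show "\<Phi> \<in> \<pi> \<rightarrow>\<^sub>M prodX K Ms" using \<Phi>_meas measurable_cong_sets[OF s\<pi> refl] by blast
    show "(\<lambda>x. indicator A x * emeasure (kt \<kappa> i x) D) \<in> borel_measurable (distr \<pi> (prodX K Ms) \<Phi>)"
      using f1 by simp
  qed
  also have "\<dots> = (\<integral>\<^sup>+ x. indicator A' x * emeasure (\<kappa> x) D' \<partial>\<pi>)"
  proof (rule nn_integral_cong)
    fix x assume "x \<in> space \<pi>"
    then have x: "x \<in> space (prodX K Ms)" using sp by simp
    show "indicator A (\<Phi> x) * emeasure (kt \<kappa> i (\<Phi> x)) D = indicator A' x * emeasure (\<kappa> x) D'"
      using emeasure_kt[OF i _ D, of \<kappa> "\<Phi> x"] \<Psi>\<Phi>[OF x] cd_kx[OF cd x] x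
      unfolding A'_def D'_def by (simp add: indicator_def)
  qed
  also have "\<dots> = emeasure \<pi> (A' \<inter> {x \<in> space (prodX K Ms). x i \<in> D'})"
    by (rule cd_int[OF cd A'inv D'])
  also have "A' \<inter> {x \<in> space (prodX K Ms). x i \<in> D'} = \<Phi> -` (A \<inter> {x \<in> space (prodX K Ms). x i \<in> D}) \<inter> space \<pi>"
    unfolding A'_def D'_def sp using \<Phi>_space i
    by (auto simp: coordmap_def space_PiM PiE_iff)
  also have "emeasure \<pi> \<dots> = emeasure (distr \<pi> (prodX K Ms) \<Phi>) (A \<inter> {x \<in> space (prodX K Ms). x i \<in> D})"
    by (rule emeasure_distr[symmetric]) (use \<Phi>_meas measurable_cong_sets[OF s\<pi> refl] A comp_set[where K=K and Ms=Ms, OF i D] in auto)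
  finally show "(\<integral>\<^sup>+ x. indicator A x * emeasure (kt \<kappa> i x) D \<partial>distr \<pi> (prodX K Ms) \<Phi>) =
       emeasure (distr \<pi> (prodX K Ms) \<Phi>) (A \<inter> {x \<in> space (prodX K Ms). x i \<in> D})" .
qed

end

context transp begin

lemma step_transport:
  assumes i: "i < K" and k: "\<kappa> \<in> prodX K Ms \<rightarrow>\<^sub>M prob_algebra (Ms i)" and x: "x \<in> space (prodX K Ms)"
  shows "distr (gibbs_step K Ms \<kappa> i x) (prodX K Ms) \<Phi> = gibbs_step K Ms (kt \<kappa> i) i (\<Phi> x)"
proof -
  have kx: "\<kappa> x \<in> space (prob_algebra (Ms i))" using measurable_space[OF k x] .
  have sk: "sets (\<kappa> x) = sets (Ms i)" using kx by (simp add: space_prob_algebra)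
  have m1: "(\<lambda>y. x(i:=y)) \<in> \<kappa> x \<rightarrow>\<^sub>M prodX K Ms"
    using upd_meas1[OF i x] measurable_cong_sets[OF sk refl] by blast
  have m2: "\<phi> i \<in> \<kappa> x \<rightarrow>\<^sub>M Ms i" using \<phi>_meas[OF i] measurable_cong_sets[OF sk refl] by blast
  have m3: "(\<lambda>y. (\<Phi> x)(i:=y)) \<in> Ms i \<rightarrow>\<^sub>M prodX K Ms" by (rule upd_meas1[OF i \<Phi>_space[OF x]])
  have "distr (gibbs_step K Ms \<kappa> i x) (prodX K Ms) \<Phi> = distr (\<kappa> x) (prodX K Ms) (\<Phi> \<circ> (\<lambda>y. x(i:=y)))"
    unfolding gibbs_step_def by (rule distr_distr[OF \<Phi>_meas m1])
  also have "\<dots> = distr (\<kappa> x) (prodX K Ms) ((\<lambda>y. (\<Phi> x)(i:=y)) \<circ> \<phi> i)"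
    by (rule distr_cong) (auto simp: \<Phi>_upd[OF i])
  also have "\<dots> = distr (distr (\<kappa> x) (Ms i) (\<phi> i)) (prodX K Ms) (\<lambda>y. (\<Phi> x)(i:=y))"
    by (rule distr_distr[OF m3 m2, symmetric])
  also have "\<dots> = gibbs_step K Ms (kt \<kappa> i) i (\<Phi> x)"
    unfolding gibbs_step_def kt_def \<Psi>\<Phi>[OF x] ..
  finally show ?thesis .
qed

lemma bind_transport:
  assumes i: "i < K" and k: "\<kappa> \<in> prodX K Ms \<rightarrow>\<^sub>M prob_algebra (Ms i)"
    and \<nu>: "\<nu> \<in> space (prob_algebra (prodX K Ms))"
  shows "distr (bind \<nu> (gibbs_step K Ms \<kappa> i)) (prodX K Ms) \<Phi> = bind (distr \<nu> (prodX K Ms) \<Phi>) (gibbs_step K Ms (kt \<kappa> i) i)"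
proof -
  have s\<nu>: "sets \<nu> = sets (prodX K Ms)" using \<nu> by (simp add: space_prob_algebra)
  have ne\<nu>: "space \<nu> \<noteq> {}" using \<nu> prob_space.not_empty by (auto simp: space_prob_algebra)
  have P: "gibbs_step K Ms \<kappa> i \<in> \<nu> \<rightarrow>\<^sub>M subprob_algebra (prodX K Ms)"
    using measurable_prob_algebraD[OF gibbs_step_meas[OF i k]] measurable_cong_sets[OF s\<nu> refl] by blast
  have P2: "gibbs_step K Ms (kt \<kappa> i) i \<in> prodX K Ms \<rightarrow>\<^sub>M subprob_algebra (prodX K Ms)"
    using measurable_prob_algebraD[OF gibbs_step_meas[OF i kt_meas[OF i k]]] .
  have F: "\<Phi> \<in> \<nu> \<rightarrow>\<^sub>M prodX K Ms" using \<Phi>_meas measurable_cong_sets[OF s\<nu> refl] by blast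
  have "distr (bind \<nu> (gibbs_step K Ms \<kappa> i)) (prodX K Ms) \<Phi> = bind \<nu> (\<lambda>x. distr (gibbs_step K Ms \<kappa> i x) (prodX K Ms) \<Phi>)"
    by (rule distr_bind[OF P ne\<nu> \<Phi>_meas])
  also have "\<dots> = bind \<nu> (\<lambda>x. gibbs_step K Ms (kt \<kappa> i) i (\<Phi> x))"
    by (rule bind_cong[OF refl]) (use step_transport[OF i k] sets_eq_imp_space_eq[OF s\<nu>] in auto)
  also have "\<dots> = bind (distr \<nu> (prodX K Ms) \<Phi>) (gibbs_step K Ms (kt \<kappa> i) i)"
    by (rule bind_distr[OF F P2 ne\<nu>, symmetric])
  finally show ?thesis .
qed

lemma distr_prob: "\<nu> \<in> space (prob_algebra (prodX K Ms)) \<Longrightarrow> distr \<nu> (prodX K Ms) \<Phi> \<in> space (prob_algebra (prodX K Ms))"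
  using measurable_space[OF measurable_distr_prob_space[OF \<Phi>_meas]] by blast

lemma nbhd_transport:
  assumes \<nu>: "\<nu> \<in> nbhd (prodX K Ms) \<pi> M" and \<pi>: "\<pi> \<in> space (prob_algebra (prodX K Ms))"
  shows "distr \<nu> (prodX K Ms) \<Phi> \<in> nbhd (prodX K Ms) (distr \<pi> (prodX K Ms) \<Phi>) M"
proof -
  have \<nu>p: "\<nu> \<in> space (prob_algebra (prodX K Ms))" and le: "\<And>A. A \<in> sets (prodX K Ms) \<Longrightarrow> measure \<nu> A \<le> M * measure \<pi> A"
    using \<nu> by (auto simp: nbhd_def)
  have s\<nu>: "sets \<nu> = sets (prodX K Ms)" using \<nu>p by (simp add: space_prob_algebra)
  have s\<pi>: "sets \<pi> = sets (prodX K Ms)" using \<pi> by (simp add: space_prob_algebra)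
  have F\<nu>: "\<Phi> \<in> \<nu> \<rightarrow>\<^sub>M prodX K Ms" using \<Phi>_meas measurable_cong_sets[OF s\<nu> refl] by blast
  have F\<pi>: "\<Phi> \<in> \<pi> \<rightarrow>\<^sub>M prodX K Ms" using \<Phi>_meas measurable_cong_sets[OF s\<pi> refl] by blast
  have "measure (distr \<nu> (prodX K Ms) \<Phi>) A \<le> M * measure (distr \<pi> (prodX K Ms) \<Phi>) A"
    if A: "A \<in> sets (prodX K Ms)" for A
  proof -
    have pre: "\<Phi> -` A \<inter> space (prodX K Ms) \<in> sets (prodX K Ms)" using measurable_sets[OF \<Phi>_meas A] .
    show ?thesis
      using le[OF pre] measure_distr[OF F\<nu> A] measure_distr[OF F\<pi> A]
        sets_eq_imp_space_eq[OF s\<nu>] sets_eq_imp_space_eq[OF s\<pi>] by simp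
  qed
  then show ?thesis using distr_prob[OF \<nu>p] by (simp add: nbhd_def)
qed

lemma full_step:
  assumes i: "i < K" and \<pi>: "\<pi> \<in> space (prob_algebra (prodX K Ms))"
    and cd: "cond_dist K Ms i \<pi> \<kappa>" and cdt: "cond_dist K Ms i (distr \<pi> (prodX K Ms) \<Phi>) \<kappa>t"
    and \<nu>: "\<nu> \<in> nbhd (prodX K Ms) \<pi> M"
  shows "distr (bind \<nu> (gibbs_step K Ms \<kappa> i)) (prodX K Ms) \<Phi> = bind (distr \<nu> (prodX K Ms) \<Phi>) (gibbs_step K Ms \<kappa>t i)"
proof -
  have \<nu>p: "\<nu> \<in> space (prob_algebra (prodX K Ms))" using \<nu> by (simp add: nbhd_def)
  have "distr (bind \<nu> (gibbs_step K Ms \<kappa> i)) (prodX K Ms) \<Phi> = bind (distr \<nu> (prodX K Ms) \<Phi>) (gibbs_step K Ms (kt \<kappa> i) i)"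
    by (rule bind_transport[OF i cd_kmeas[OF cd] \<nu>p])
  also have "\<dots> = bind (distr \<nu> (prodX K Ms) \<Phi>) (gibbs_step K Ms \<kappa>t i)"
    by (rule uniq[OF i distr_prob[OF \<pi>] cd_transport[OF i \<pi> cd] cdt nbhd_transport[OF \<nu> \<pi>]])
  finally show ?thesis .
qed

end

lemma scan_meas:
  "(\<And>i. i < k \<Longrightarrow> P i \<in> X \<rightarrow>\<^sub>M prob_algebra X) \<Longrightarrow> scan_kernel X P k \<in> X \<rightarrow>\<^sub>M prob_algebra X"
proof (induction k)
  case 0
  show ?case by (simp add: measurable_prob_algebraI prob_space_return)
next
  case (Suc k)
  have "(\<lambda>x. bind (scan_kernel X P k x) (P k)) \<in> X \<rightarrow>\<^sub>M prob_algebra X"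
    by (rule measurable_bind_prob_space) (use Suc in auto)
  then show ?case by simp
qed

context transp begin

lemma scan_transport:
  assumes \<pi>: "\<pi> \<in> space (prob_algebra (prodX K Ms))"
    and cd: "\<And>i. i < K \<Longrightarrow> cond_dist K Ms i \<pi> (\<kappa> i)"
    and cdt: "\<And>i. i < K \<Longrightarrow> cond_dist K Ms i (distr \<pi> (prodX K Ms) \<Phi>) (\<kappa>t i)"
    and M: "0 \<le> M"
  shows "k \<le> K \<Longrightarrow> \<nu> \<in> nbhd (prodX K Ms) \<pi> M \<Longrightarrow>
    bind \<nu> (scan_kernel (prodX K Ms) (\<lambda>i. gibbs_step K Ms (\<kappa> i) i) k) \<in> nbhd (prodX K Ms) \<pi> M \<and>
    distr (bind \<nu> (scan_kernel (prodX K Ms) (\<lambda>i. gibbs_step K Ms (\<kappa> i) i) k)) (prodX K Ms) \<Phi>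
      = bind (distr \<nu> (prodX K Ms) \<Phi>) (scan_kernel (prodX K Ms) (\<lambda>i. gibbs_step K Ms (\<kappa>t i) i) k)"
proof (induction k)
  case 0
  have \<nu>p: "\<nu> \<in> space (prob_algebra (prodX K Ms))" using 0 by (simp add: nbhd_def)
  have s\<nu>: "sets \<nu> = sets (prodX K Ms)" using \<nu>p by (simp add: space_prob_algebra)
  have s\<nu>t: "sets (distr \<nu> (prodX K Ms) \<Phi>) = sets (prodX K Ms)" by simp
  show ?case using 0 bind_return''[OF s\<nu>] bind_return''[OF s\<nu>t] by simp
next
  case (Suc k)
  let ?S = "scan_kernel (prodX K Ms) (\<lambda>i. gibbs_step K Ms (\<kappa> i) i)"
  let ?St = "scan_kernel (prodX K Ms) (\<lambda>i. gibbs_step K Ms (\<kappa>t i) i)"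
  have k: "k < K" using Suc by simp
  have \<nu>p: "\<nu> \<in> space (prob_algebra (prodX K Ms))" using Suc by (simp add: nbhd_def)
  have s\<nu>: "sets \<nu> = sets (prodX K Ms)" using \<nu>p by (simp add: space_prob_algebra)
  have s\<nu>t: "sets (distr \<nu> (prodX K Ms) \<Phi>) = sets (prodX K Ms)" by simp
  have Sm: "?S k \<in> prodX K Ms \<rightarrow>\<^sub>M prob_algebra (prodX K Ms)"
  proof (rule scan_meas)
    fix i assume "i < k"
    then have i: "i < K" using k by simp
    show "gibbs_step K Ms (\<kappa> i) i \<in> prodX K Ms \<rightarrow>\<^sub>M prob_algebra (prodX K Ms)"
      by (rule gibbs_step_meas[OF i cd_kmeas[OF cd[OF i]]])
  qed
  have Stm: "?St k \<in> prodX K Ms \<rightarrow>\<^sub>M prob_algebra (prodX K Ms)"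
  proof (rule scan_meas)
    fix i assume "i < k"
    then have i: "i < K" using k by simp
    show "gibbs_step K Ms (\<kappa>t i) i \<in> prodX K Ms \<rightarrow>\<^sub>M prob_algebra (prodX K Ms)"
      by (rule gibbs_step_meas[OF i cd_kmeas[OF cdt[OF i]]])
  qed
  have Pk: "gibbs_step K Ms (\<kappa> k) k \<in> prodX K Ms \<rightarrow>\<^sub>M prob_algebra (prodX K Ms)"
    by (rule gibbs_step_meas[OF k cd_kmeas[OF cd[OF k]]])
  have Ptk: "gibbs_step K Ms (\<kappa>t k) k \<in> prodX K Ms \<rightarrow>\<^sub>M prob_algebra (prodX K Ms)"
    by (rule gibbs_step_meas[OF k cd_kmeas[OF cdt[OF k]]])
  have smS: "?S k \<in> (\<nu>) \<rightarrow>\<^sub>M subprob_algebra (prodX K Ms)"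
    using measurable_prob_algebraD[OF Sm] measurable_cong_sets[OF s\<nu> refl] by blast
  have e1: "bind \<nu> (?S (Suc k)) = bind (bind \<nu> (?S k)) (gibbs_step K Ms (\<kappa> k) k)"
    using bind_assoc[OF smS measurable_prob_algebraD[OF Pk]] by simp
  have smSt: "?St k \<in> (distr \<nu> (prodX K Ms) \<Phi>) \<rightarrow>\<^sub>M subprob_algebra (prodX K Ms)"
    using measurable_prob_algebraD[OF Stm] measurable_cong_sets[OF s\<nu>t refl] by blast
  have e2: "bind (distr \<nu> (prodX K Ms) \<Phi>) (?St (Suc k)) = bind (bind (distr \<nu> (prodX K Ms) \<Phi>) (?St k)) (gibbs_step K Ms (\<kappa>t k) k)"
    using bind_assoc[OF smSt measurable_prob_algebraD[OF Ptk]] by simp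
  from Suc have IH: "bind \<nu> (?S k) \<in> nbhd (prodX K Ms) \<pi> M"
    "distr (bind \<nu> (?S k)) (prodX K Ms) \<Phi> = bind (distr \<nu> (prodX K Ms) \<Phi>) (?St k)" by auto
  show ?case
    unfolding e1 e2
    using preserve[OF k \<pi> cd[OF k] IH(1) M] full_step[OF k \<pi> cd[OF k] cdt[OF k] IH(1)] IH(2) by simp
qed

lemma iter_transport:
  assumes \<pi>: "\<pi> \<in> space (prob_algebra (prodX K Ms))"
    and cd: "\<And>i. i < K \<Longrightarrow> cond_dist K Ms i \<pi> (\<kappa> i)"
    and cdt: "\<And>i. i < K \<Longrightarrow> cond_dist K Ms i (distr \<pi> (prodX K Ms) \<Phi>) (\<kappa>t i)"
    and M: "0 \<le> M" and \<nu>: "\<nu> \<in> nbhd (prodX K Ms) \<pi> M"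
  shows "iter_kernel \<nu> (gibbs_kernel K Ms \<kappa>) t \<in> nbhd (prodX K Ms) \<pi> M \<and>
    distr (iter_kernel \<nu> (gibbs_kernel K Ms \<kappa>) t) (prodX K Ms) \<Phi>
      = iter_kernel (distr \<nu> (prodX K Ms) \<Phi>) (gibbs_kernel K Ms \<kappa>t) t"
proof (induction t)
  case 0
  then show ?case using \<nu> by (simp add: iter_kernel_def)
next
  case (Suc t)
  have it: "iter_kernel \<mu> P (Suc t) = bind (iter_kernel \<mu> P t) P" for \<mu> :: "(nat \<Rightarrow> 'a) measure" and P
    by (simp add: iter_kernel_def)
  show ?case
    unfolding it gibbs_kernel_def
    using scan_transport[OF \<pi> cd cdt M order_refl, of "iter_kernel \<nu> (gibbs_kernel K Ms \<kappa>) t"] Suc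
    unfolding gibbs_kernel_def by simp
qed

lemma tv_transport:
  assumes a: "a \<in> space (prob_algebra (prodX K Ms))" and b: "b \<in> space (prob_algebra (prodX K Ms))"
  shows "tv_dist (prodX K Ms) (distr a (prodX K Ms) \<Phi>) (distr b (prodX K Ms) \<Phi>) = tv_dist (prodX K Ms) a b"
proof -
  have sa: "sets a = sets (prodX K Ms)" using a by (simp add: space_prob_algebra)
  have sb: "sets b = sets (prodX K Ms)" using b by (simp add: space_prob_algebra)
  have Fa: "\<Phi> \<in> a \<rightarrow>\<^sub>M prodX K Ms" using \<Phi>_meas measurable_cong_sets[OF sa refl] by blast
  have Fb: "\<Phi> \<in> b \<rightarrow>\<^sub>M prodX K Ms" using \<Phi>_meas measurable_cong_sets[OF sb refl] by blast
  note spa = sets_eq_imp_space_eq[OF sa] and spb = sets_eq_imp_space_eq[OF sb]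
  have md: "\<bar>measure (distr a (prodX K Ms) \<Phi>) A - measure (distr b (prodX K Ms) \<Phi>) A\<bar>
     = \<bar>measure a (\<Phi> -` A \<inter> space (prodX K Ms)) - measure b (\<Phi> -` A \<inter> space (prodX K Ms))\<bar>"
    if A: "A \<in> sets (prodX K Ms)" for A
    using measure_distr[OF Fa A] measure_distr[OF Fb A] spa spb by simp
  have "(\<lambda>A. \<bar>measure (distr a (prodX K Ms) \<Phi>) A - measure (distr b (prodX K Ms) \<Phi>) A\<bar>) ` sets (prodX K Ms)
      = (\<lambda>A. \<bar>measure a A - measure b A\<bar>) ` sets (prodX K Ms)"
  proof (intro set_eqI iffI)
    fix r assume "r \<in> (\<lambda>A. \<bar>measure (distr a (prodX K Ms) \<Phi>) A - measure (distr b (prodX K Ms) \<Phi>) A\<bar>) ` sets (prodX K Ms)"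
    then obtain A where A: "A \<in> sets (prodX K Ms)" and r: "r = \<bar>measure (distr a (prodX K Ms) \<Phi>) A - measure (distr b (prodX K Ms) \<Phi>) A\<bar>"
      by blast
    show "r \<in> (\<lambda>A. \<bar>measure a A - measure b A\<bar>) ` sets (prodX K Ms)"
      using md[OF A] r measurable_sets[OF \<Phi>_meas A] by blast
  next
    fix r assume "r \<in> (\<lambda>A. \<bar>measure a A - measure b A\<bar>) ` sets (prodX K Ms)"
    then obtain B where B: "B \<in> sets (prodX K Ms)" and r: "r = \<bar>measure a B - measure b B\<bar>"
      by blast
    define A where "A = \<Psi> -` B \<inter> space (prodX K Ms)"
    have A: "A \<in> sets (prodX K Ms)" unfolding A_def by (rule measurable_sets[OF \<Psi>_meas B])
    have AB: "\<Phi> -` A \<inter> space (prodX K Ms) = B"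
      unfolding A_def using \<Psi>\<Phi> \<Phi>_space sets.sets_into_space[OF B] by auto
    show "r \<in> (\<lambda>A. \<bar>measure (distr a (prodX K Ms) \<Phi>) A - measure (distr b (prodX K Ms) \<Phi>) A\<bar>) ` sets (prodX K Ms)"
    proof (rule image_eqI[where x=A])
      show "r = \<bar>measure (distr a (prodX K Ms) \<Phi>) A - measure (distr b (prodX K Ms) \<Phi>) A\<bar>"
        using md[OF A] r AB by simp
    qed (rule A)
  qed
  then show ?thesis unfolding tv_dist_def by simp
qed

end

context transp begin

lemma nbhd_surj:
  assumes \<pi>: "\<pi> \<in> space (prob_algebra (prodX K Ms))" and \<mu>t: "\<mu>t \<in> nbhd (prodX K Ms) (distr \<pi> (prodX K Ms) \<Phi>) M"
  shows "\<exists>\<mu>\<in>nbhd (prodX K Ms) \<pi> M. \<mu>t = distr \<mu> (prodX K Ms) \<Phi>"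
proof -
  let ?X = "prodX K Ms"
  have \<mu>tp: "\<mu>t \<in> space (prob_algebra ?X)" and le: "\<And>A. A \<in> sets ?X \<Longrightarrow> measure \<mu>t A \<le> M * measure (distr \<pi> ?X \<Phi>) A"
    using \<mu>t by (auto simp: nbhd_def)
  have s\<mu>: "sets \<mu>t = sets ?X" using \<mu>tp by (simp add: space_prob_algebra)
  have s\<pi>: "sets \<pi> = sets ?X" using \<pi> by (simp add: space_prob_algebra)
  note sp\<mu> = sets_eq_imp_space_eq[OF s\<mu>] and sp\<pi> = sets_eq_imp_space_eq[OF s\<pi>]
  have F\<pi>: "\<Phi> \<in> \<pi> \<rightarrow>\<^sub>M ?X" using \<Phi>_meas measurable_cong_sets[OF s\<pi> refl] by blast
  have G\<mu>: "\<Psi> \<in> \<mu>t \<rightarrow>\<^sub>M ?X" using \<Psi>_meas measurable_cong_sets[OF s\<mu> refl] by blast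
  define \<mu> where "\<mu> = distr \<mu>t ?X \<Psi>"
  have \<mu>p: "\<mu> \<in> space (prob_algebra ?X)"
    unfolding \<mu>_def using measurable_space[OF measurable_distr_prob_space[OF \<Psi>_meas] \<mu>tp] .
  have pre: "\<Phi> -` (\<Psi> -` A \<inter> space ?X) \<inter> space ?X = A" if "A \<in> sets ?X" for A
    using \<Psi>\<Phi> \<Phi>_space sets.sets_into_space[OF that] by auto
  have "measure \<mu> A \<le> M * measure \<pi> A" if A: "A \<in> sets ?X" for A
  proof -
    have B: "\<Psi> -` A \<inter> space ?X \<in> sets ?X" by (rule measurable_sets[OF \<Psi>_meas A])
    have "measure \<mu> A = measure \<mu>t (\<Psi> -` A \<inter> space ?X)"
      unfolding \<mu>_def using measure_distr[OF G\<mu> A] sp\<mu> by simp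
    also have "\<dots> \<le> M * measure (distr \<pi> ?X \<Phi>) (\<Psi> -` A \<inter> space ?X)" by (rule le[OF B])
    also have "measure (distr \<pi> ?X \<Phi>) (\<Psi> -` A \<inter> space ?X) = measure \<pi> A"
      using measure_distr[OF F\<pi> B] sp\<pi> pre[OF A] by simp
    finally show ?thesis .
  qed
  then have \<mu>N: "\<mu> \<in> nbhd ?X \<pi> M" using \<mu>p by (simp add: nbhd_def)
  define N where "N = (\<Union>j\<in>{..<K}. {x \<in> space ?X. x j \<in> space (Ms j) - \<phi> j ` space (Ms j)})"
  have Ns: "N \<in> sets ?X" unfolding N_def
  proof (rule sets.finite_UN)
    fix j assume "j \<in> {..<K}"
    then have j: "j < K" by simp
    have "space (Ms j) - \<phi> j ` space (Ms j) \<in> sets (Ms j)"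
      using \<phi>_img[OF j sets.top] by (rule sets.Diff[OF sets.top])
    then show "{x \<in> space ?X. x j \<in> space (Ms j) - \<phi> j ` space (Ms j)} \<in> sets ?X"
      by (rule comp_set[OF j])
  qed simp
  have "emeasure (distr \<pi> ?X \<Phi>) N = emeasure \<pi> (\<Phi> -` N \<inter> space \<pi>)"
    by (rule emeasure_distr[OF F\<pi> Ns])
  also have "\<Phi> -` N \<inter> space \<pi> = {}"
    unfolding N_def sp\<pi> using \<Phi>_space by (auto simp: coordmap_def space_PiM PiE_iff)
  finally have N0: "emeasure (distr \<pi> ?X \<Phi>) N = 0" by simp
  have "AE x in distr \<pi> ?X \<Phi>. x \<notin> N"
    by (rule AE_I[OF _ N0]) (use Ns in auto)
  then have "AE x in \<mu>t. x \<notin> N" by (rule ae_transfer[OF \<mu>t distr_prob[OF \<pi>]])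
  then have ae: "AE x in \<mu>t. \<Phi> (\<Psi> x) = x"
  proof (rule AE_mp[OF _ AE_I2[OF impI]])
    fix x assume x: "x \<in> space \<mu>t" and "x \<notin> N"
    then show "\<Phi> (\<Psi> x) = x" using \<Phi>\<Psi>[of x] sp\<mu> unfolding N_def by (auto simp: space_PiM)
  qed
  have "distr \<mu> ?X \<Phi> = distr \<mu>t ?X (\<Phi> \<circ> \<Psi>)"
    unfolding \<mu>_def by (rule distr_distr[OF \<Phi>_meas G\<mu>])
  also have "\<dots> = distr \<mu>t ?X (\<lambda>x. x)"
    by (rule distr_cong_AE[OF refl refl]) (use ae measurable_comp[OF G\<mu> \<Phi>_meas] s\<mu> in \<open>auto simp: o_def\<close>)
  also have "\<dots> = \<mu>t" by (rule distr_id2[OF s\<mu>[symmetric]])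
  finally show ?thesis using \<mu>N by auto
qed

end

theorem lemma2p1:
  fixes K :: nat
    and Ms :: "nat \<Rightarrow> 'a measure"
    and Q :: "nat \<Rightarrow> 'y measure"
    and \<pi> :: "nat \<Rightarrow> 'y \<Rightarrow> (nat \<Rightarrow> 'a) measure"
    and \<pi>lim :: "(nat \<Rightarrow> 'a) measure"
    and \<phi> :: "nat \<Rightarrow> 'y \<Rightarrow> nat \<Rightarrow> 'a \<Rightarrow> 'a"
    and n :: nat and y :: 'y
    and \<kappa> \<kappa>t :: "nat \<Rightarrow> (nat \<Rightarrow> 'a) \<Rightarrow> 'a measure"
    and t :: nat and M :: real
  assumes Q: "\<And>m. prob_space (Q m)"
    and \<pi>_prob: "\<And>m z. z \<in> space (Q m) \<Longrightarrow> \<pi> m z \<in> space (prob_algebra (prodX K Ms))"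
    and \<pi>lim: "\<pi>lim \<in> space (prob_algebra (prodX K Ms))"
    and \<phi>_meas: "\<And>m z j. z \<in> space (Q m) \<Longrightarrow> j < K \<Longrightarrow> \<phi> m z j \<in> Ms j \<rightarrow>\<^sub>M Ms j"
    and \<phi>_inj: "\<And>m z j. z \<in> space (Q m) \<Longrightarrow> j < K \<Longrightarrow> inj_on (\<phi> m z j) (space (Ms j))"
    and \<phi>_img: "\<And>m z j A. z \<in> space (Q m) \<Longrightarrow> j < K \<Longrightarrow> A \<in> sets (Ms j) \<Longrightarrow>
                   \<phi> m z j ` A \<in> sets (Ms j)"
    and A1: "\<And>e. e > 0 \<Longrightarrow> \<exists>B. (\<forall>m. B m \<in> sets (Q m) \<and>
                 {z \<in> space (Q m). e < tv_dist (prodX K Ms)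
                     (distr (\<pi> m z) (prodX K Ms) (coordmap K (\<phi> m z))) \<pi>lim} \<subseteq> B m)
               \<and> (\<lambda>m. measure (Q m) (B m)) \<longlonglongrightarrow> 0"
    and y: "y \<in> space (Q n)"
    and \<kappa>: "\<And>i. i < K \<Longrightarrow> cond_dist K Ms i (\<pi> n y) (\<kappa> i)"
    and \<kappa>t: "\<And>i. i < K \<Longrightarrow>
               cond_dist K Ms i (distr (\<pi> n y) (prodX K Ms) (coordmap K (\<phi> n y))) (\<kappa>t i)"
    and M: "1 \<le> M"
  shows "(SUP \<mu>\<in>nbhd (prodX K Ms) (\<pi> n y) M.
            tv_dist (prodX K Ms) (iter_kernel \<mu> (gibbs_kernel K Ms \<kappa>) t) (\<pi> n y))
       = (SUP \<mu>\<in>nbhd (prodX K Ms) (distr (\<pi> n y) (prodX K Ms) (coordmap K (\<phi> n y))) M.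
            tv_dist (prodX K Ms) (iter_kernel \<mu> (gibbs_kernel K Ms \<kappa>t) t)
              (distr (\<pi> n y) (prodX K Ms) (coordmap K (\<phi> n y))))"
proof -
  let ?X = "prodX K Ms"
  let ?\<pi> = "\<pi> n y"
  have \<pi>p: "?\<pi> \<in> space (prob_algebra ?X)" by (rule \<pi>_prob[OF y])
  have ne: "space (Ms j) \<noteq> {}" if j: "j < K" for j
  proof -
    have "space ?\<pi> \<noteq> {}" using \<pi>p prob_space.not_empty by (auto simp: space_prob_algebra)
    moreover have "space ?\<pi> = space ?X" using \<pi>p sets_eq_imp_space_eq by (auto simp: space_prob_algebra)
    ultimately have "(\<Pi>\<^sub>E j\<in>{..<K}. space (Ms j)) \<noteq> {}" by (simp add: space_PiM)
    then show ?thesis using j by (auto simp: PiE_eq_empty_iff)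
  qed
  interpret tr: transp K Ms "\<phi> n y"
    by unfold_locales (use \<phi>_meas[OF y] \<phi>_inj[OF y] \<phi>_img[OF y] ne in auto)
  have M0: "0 \<le> M" using M by simp
  let ?f = "\<lambda>\<mu>. tv_dist ?X (iter_kernel \<mu> (gibbs_kernel K Ms \<kappa>) t) ?\<pi>"
  let ?g = "\<lambda>\<mu>. tv_dist ?X (iter_kernel \<mu> (gibbs_kernel K Ms \<kappa>t) t) (distr ?\<pi> ?X (coordmap K (\<phi> n y)))"
  have fg: "?f \<mu> = ?g (distr \<mu> ?X (coordmap K (\<phi> n y)))" if \<mu>: "\<mu> \<in> nbhd ?X ?\<pi> M" for \<mu>
  proof -
    have it: "iter_kernel \<mu> (gibbs_kernel K Ms \<kappa>) t \<in> nbhd ?X ?\<pi> M \<and>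
      distr (iter_kernel \<mu> (gibbs_kernel K Ms \<kappa>) t) ?X (coordmap K (\<phi> n y))
        = iter_kernel (distr \<mu> ?X (coordmap K (\<phi> n y))) (gibbs_kernel K Ms \<kappa>t) t"
      by (rule tr.iter_transport[OF \<pi>p \<kappa> \<kappa>t M0 \<mu>])
    then have ip: "iter_kernel \<mu> (gibbs_kernel K Ms \<kappa>) t \<in> space (prob_algebra ?X)"
      by (simp add: nbhd_def)
    show ?thesis using tr.tv_transport[OF ip \<pi>p] it by simp
  qed
  have img: "(\<lambda>\<mu>. distr \<mu> ?X (coordmap K (\<phi> n y))) ` nbhd ?X ?\<pi> M = nbhd ?X (distr ?\<pi> ?X (coordmap K (\<phi> n y))) M"
  proof
    show "(\<lambda>\<mu>. distr \<mu> ?X (coordmap K (\<phi> n y))) ` nbhd ?X ?\<pi> M \<subseteq> nbhd ?X (distr ?\<pi> ?X (coordmap K (\<phi> n y))) M"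
      using tr.nbhd_transport[OF _ \<pi>p] by blast
    show "nbhd ?X (distr ?\<pi> ?X (coordmap K (\<phi> n y))) M \<subseteq> (\<lambda>\<mu>. distr \<mu> ?X (coordmap K (\<phi> n y))) ` nbhd ?X ?\<pi> M"
      using tr.nbhd_surj[OF \<pi>p] by blast
  qed
  have "(SUP \<mu>\<in>nbhd ?X ?\<pi> M. ?f \<mu>) = (SUP \<mu>\<in>nbhd ?X ?\<pi> M. ?g (distr \<mu> ?X (coordmap K (\<phi> n y))))"
    by (rule SUP_cong[OF refl fg])
  also have "\<dots> = (SUP \<mu>\<in>(\<lambda>\<mu>. distr \<mu> ?X (coordmap K (\<phi> n y))) ` nbhd ?X ?\<pi> M. ?g \<mu>)"
    by (simp add: image_image)
  also have "\<dots> = (SUP \<mu>\<in>nbhd ?X (distr ?\<pi> ?X (coordmap K (\<phi> n y))) M. ?g \<mu>)"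
    unfolding img ..
  finally show ?thesis .
qed

end
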